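(* Let $E$ be a spectral set in a FTvN system $(\mathcal V,\mathcal W,\lambda)$. Then: (a) $\overline{E}$, $E^\circ$ and $\partial(E)$ are spectral. (b) If $\mathcal V$ is a Hilbert space, then $\overline{\operatorname{conv}(E)}$ is spectral. (c) If $\mathcal V$ is finite dimensional, then $\operatorname{conv}(E)$ is spectral; additionally, the convex cone generated by $E$ is spectral. (d) If $\mathcal V$ is a Hilbert space, then $E^p$ is spectral. In particular, if $\mathcal V$ is a Hilbert space and $S$ is a spectral set which is also a linear subspace of $\mathcal V$, then $S^\perp$ is spectral. (e) If $\mathcal V$ is a Hilbert space, then the sum of two compact convex spectral sets in $\mathcal V$ is spectral. (f) If $\mathcal V$ is finite dimensional, then the sum of two convex spectral sets is spectral.
   Context: A Fan-Theobald-von Neumann (FTvN) system is a triple $(\mathcal V,\mathcal W,\lambda)$ where $\mathcal V,\mathcal W$ are real inner product spaces and $\lambda:\mathcal V\to\mathcal W$ is a map such that: (A1) $\|\lambda(x)\|=\|x\|$ for all $x$; (A2) $\langle x,y\rangle\le\langle\lambda(x),\lambda(y)\rangle$ for all $x,y$; (A3) for every $c\in\mathcal V$ and $q\in\lambda(\mathcal V)$ there exists $x\in\mathcal V$ with $\lambda(x)=q$ and $\langle c,x\rangle=\langle\lambda(c),\lambda(x)\rangle$. The $\lambda$-orbit of $u$ is $[u]=\{x:\lambda(x)=\lambda(u)\}$. A set $E\subseteq\mathcal V$ is spectral if $E=\lambda^{-1}(Q)$ for some $Q\subseteq\mathcal W$, equivalently $x\in E\Rightarrow[x]\subseteq E$.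 $\overline{E}$, $E^\circ$, $\partial(E)$, $S^\perp$ denote closure, interior, boundary, orthogonal complement; $E^p=\{y\in\mathcal V:\langle y,x\rangle\le0\ \forall x\in E\}$ is the polar cone of $E$. *)

theory Defs
  imports "HOL-Analysis.Analysis"
begin

text \<open>Fan-Theobald-von Neumann system (V, W, lam): V and W are real inner product
  spaces (types of class real_inner), lam : V -> W satisfies (A1)-(A3).\<close>
definition FTvN :: "('v::real_inner \<Rightarrow> 'w::real_inner) \<Rightarrow> bool" where
  "FTvN lam \<longleftrightarrow>
     (\<forall>x. norm (lam x) = norm x) \<and>
     (\<forall>x y. inner x y \<le> inner (lam x) (lam y)) \<and>
     (\<forall>c q. q \<in> range lam \<longrightarrow> (\<exists>x. lam x = q \<and> inner c x = inner (lam c) (lam x)))"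

definition spectral :: "('v \<Rightarrow> 'w) \<Rightarrow> 'v set \<Rightarrow> bool" where
  "spectral lam E \<longleftrightarrow> (\<exists>Q. E = lam -` Q)"

definition polar_cone :: "'v::real_inner set \<Rightarrow> 'v set" where
  "polar_cone E = {y. \<forall>x\<in>E. inner y x \<le> 0}"

definition mink_sum :: "'v::real_vector set \<Rightarrow> 'v set \<Rightarrow> 'v set" where
  "mink_sum A B = {a + b | a b. a \<in> A \<and> b \<in> B}"

definition hilbert_space :: "'v::real_inner itself \<Rightarrow> bool" where
  "hilbert_space _ \<longleftrightarrow> complete (UNIV :: 'v set)"

definition fin_dim :: "'v::real_vector itself \<Rightarrow> bool" where
  "fin_dim _ \<longleftrightarrow> (\<exists>B :: 'v set. finite B \<and> span B = UNIV)"

end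

theory Submission
  imports Defs
begin


lemma spectral_iff: "spectral lam E \<longleftrightarrow> (\<forall>x y. x \<in> E \<longrightarrow> lam y = lam x \<longrightarrow> y \<in> E)"
proof
  assume "spectral lam E" then obtain Q where "E = lam -` Q" unfolding spectral_def by blast
  then show "\<forall>x y. x \<in> E \<longrightarrow> lam y = lam x \<longrightarrow> y \<in> E" by auto
next
  assume H: "\<forall>x y. x \<in> E \<longrightarrow> lam y = lam x \<longrightarrow> y \<in> E"
  have "E = lam -` (lam ` E)" using H by auto
  then show "spectral lam E" unfolding spectral_def by blast
qed

lemma spectralD: "spectral lam E \<Longrightarrow> x \<in> E \<Longrightarrow> lam y = lam x \<Longrightarrow> y \<in> E"
  unfolding spectral_def by auto

lemma spectralI: "(\<And>x y. x \<in> E \<Longrightarrow> lam y = lam x \<Longrightarrow> y \<in> E) \<Longrightarrow> spectral lam E"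
  by (subst spectral_iff) blast

lemma spectral_compl: "spectral lam E \<Longrightarrow> spectral lam (- E)"
  by (rule spectralI) (metis ComplD ComplI spectralD)

lemma spectral_diff: "spectral lam E \<Longrightarrow> spectral lam F \<Longrightarrow> spectral lam (E - F)"
  by (rule spectralI) (metis DiffD1 DiffD2 DiffI spectralD)

context
  fixes lam :: "'v::real_inner \<Rightarrow> 'w::real_inner"
  assumes ftvn: "FTvN lam"
begin

lemma F1: "norm (lam x) = norm x" using ftvn unfolding FTvN_def by blast
lemma F2: "inner x y \<le> inner (lam x) (lam y)" using ftvn unfolding FTvN_def by blast
lemma F3: "\<exists>x. lam x = lam u \<and> inner c x = inner (lam c) (lam u)"
proof -
  have "lam u \<in> range lam" by simp
  then obtain x where "lam x = lam u" "inner c x = inner (lam c) (lam x)"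
    using ftvn unfolding FTvN_def by blast
  then show ?thesis by auto
qed

lemma norm_diff_sq: "(norm (a - b))\<^sup>2 = (norm a)\<^sup>2 + (norm b)\<^sup>2 - 2 * inner a (b::'a::real_inner)"
  by (simp add: power2_norm_eq_inner inner_diff_left inner_diff_right inner_commute)

lemma lam_lip: "norm (lam u - lam v) \<le> norm (u - v)"
proof -
  have "(norm (lam u - lam v))\<^sup>2 \<le> (norm (u - v))\<^sup>2"
  proof -
    have a: "(norm (lam u - lam v))\<^sup>2 = (norm (lam u))\<^sup>2 + (norm (lam v))\<^sup>2 - 2 * inner (lam u) (lam v)" by (rule norm_diff_sq)
    have b: "(norm (u - v))\<^sup>2 = (norm u)\<^sup>2 + (norm v)\<^sup>2 - 2 * inner u v" by (rule norm_diff_sq)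
    show ?thesis unfolding a b F1 using F2[of u v] by linarith
  qed
  then show ?thesis by (rule power2_le_imp_le) simp
qed

lemma lam_cont: "continuous_on S lam"
  by (rule lipschitz_on_continuous_on[of 1]) (auto simp: lipschitz_on_def dist_norm lam_lip)

lemma L1: "\<exists>v'. lam v' = lam v \<and> norm (u - v') = norm (lam u - lam v)"
proof -
  obtain v' where v': "lam v' = lam v" "inner u v' = inner (lam u) (lam v)" using F3 by blast
  have "(norm (u - v'))\<^sup>2 = (norm (lam u - lam v))\<^sup>2"
  proof -
    have "(norm (u - v'))\<^sup>2 = (norm u)\<^sup>2 + (norm v')\<^sup>2 - 2 * inner u v'" by (rule norm_diff_sq)
    moreover have "(norm (lam u - lam v))\<^sup>2 = (norm (lam u))\<^sup>2 + (norm (lam v))\<^sup>2 - 2 * inner (lam u) (lam v)" by (rule norm_diff_sq)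
    moreover have "norm v' = norm v" using v'(1) F1[of v] F1[of v'] by metis
    ultimately show ?thesis using v'(2) F1[of u] F1[of v] by (smt (verit))
  qed
  then have "norm (u - v') = norm (lam u - lam v)" by (simp add: power2_eq_iff_nonneg)
  with v' show ?thesis by blast
qed

lemma key: "spectral lam S \<Longrightarrow> e \<in> S \<Longrightarrow> \<exists>e'\<in>S. inner (lam c) (lam e) = inner c e'"
  using F3[of e c] spectralD by metis

lemma spectral_closure: "spectral lam E \<Longrightarrow> spectral lam (closure E)"
proof (rule spectralI)
  fix x y assume E: "spectral lam E" and x: "x \<in> closure E" and y: "lam y = lam x"
  show "y \<in> closure E" unfolding closure_approachable
  proof (intro allI impI)
    fix e :: real assume "e > 0"
    then obtain z where z: "z \<in> E" "dist z x < e" using x closure_approachable by metis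
    obtain z' where z': "lam z' = lam z" "norm (y - z') = norm (lam y - lam z)" using L1 by blast
    have "z' \<in> E" using E z z' spectralD by metis
    moreover have "dist z' y < e" using z z' y lam_lip[of x z]
      by (simp add: dist_norm norm_minus_commute)
    ultimately show "\<exists>z\<in>E. dist z y < e" by blast
  qed
qed

lemma spectral_interior: "spectral lam E \<Longrightarrow> spectral lam (interior E)"
  unfolding interior_closure by (intro spectral_compl spectral_closure)

lemma spectral_frontier: "spectral lam E \<Longrightarrow> spectral lam (frontier E)"
  unfolding frontier_def by (intro spectral_diff spectral_closure spectral_interior)

lemma polar_aux: "spectral lam S \<Longrightarrow> lam y' = lam y \<Longrightarrow> x \<in> S \<Longrightarrow> \<exists>w\<in>S. inner y' x \<le> inner y w"
proof -
  assume S: "spectral lam S" and y: "lam y' = lam y" and x: "x \<in> S"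
  obtain w where w: "lam w = lam x" "inner y w = inner (lam y) (lam x)" using F3 by blast
  have "w \<in> S" using S x w spectralD by metis
  moreover have "inner y' x \<le> inner y w" using F2[of y' x] y w by simp
  ultimately show ?thesis by blast
qed

lemma spectral_polar: "spectral lam E \<Longrightarrow> spectral lam (polar_cone E)"
  unfolding polar_cone_def
  by (rule spectralI) (smt (verit) mem_Collect_eq polar_aux)

lemma spectral_orth: "spectral lam S \<Longrightarrow> subspace S \<Longrightarrow> spectral lam (orthogonal_comp S)"
proof (rule spectralI)
  fix x y assume S: "spectral lam S" "subspace S" and x: "x \<in> orthogonal_comp S" and y: "lam y = lam x"
  show "y \<in> orthogonal_comp S" unfolding orthogonal_comp_def orthogonal_def
  proof (intro CollectI ballI)
    fix z assume z: "z \<in> S"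
    have mz: "- z \<in> S" using S z subspace_neg by blast
    obtain w where w: "w \<in> S" "inner y z \<le> inner x w" using polar_aux[OF S(1) y z] by blast
    obtain w' where w': "w' \<in> S" "inner y (-z) \<le> inner x w'" using polar_aux[OF S(1) y mz] by blast
    have "inner x w = 0" "inner x w' = 0" using x w w' unfolding orthogonal_comp_def orthogonal_def
      by (auto simp: inner_commute)
    then have "inner y z = 0" using w w' by simp
    then show "inner z y = 0" by (simp add: inner_commute)
  qed
qed

lemma lam_homog: assumes "c \<ge> 0" shows "lam (c *\<^sub>R x) = c *\<^sub>R lam x"
proof -
  have "(norm (lam (c *\<^sub>R x) - c *\<^sub>R lam x))\<^sup>2 \<le> 0"
  proof -
    have "(norm (lam (c *\<^sub>R x) - c *\<^sub>R lam x))\<^sup>2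
        = (norm (c *\<^sub>R x))\<^sup>2 + (norm (c *\<^sub>R x))\<^sup>2 - 2 * c * inner (lam (c *\<^sub>R x)) (lam x)"
      unfolding norm_diff_sq F1 using assms by (simp add: power_mult_distrib F1[of x])
    also have "\<dots> \<le> (norm (c *\<^sub>R x))\<^sup>2 + (norm (c *\<^sub>R x))\<^sup>2 - 2 * c * inner (c *\<^sub>R x) x"
      using F2[of "c *\<^sub>R x" x] assms by (simp add: mult_left_mono)
    also have "\<dots> = 0"
    proof -
      have nx: "inner x x = (norm x)\<^sup>2" by (simp add: dot_square_norm)
      show ?thesis using assms by (simp add: power_mult_distrib nx power2_eq_square)
    qed
    finally show ?thesis .
  qed
  then show ?thesis by simp
qed

lemma lam_zero: "lam y = lam 0 \<Longrightarrow> y = 0"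
  using F1[of y] F1[of 0] by simp

lemma spectral_conic: "spectral lam C \<Longrightarrow> spectral lam (conic hull C)"
  unfolding conic_hull_explicit
proof (rule spectralI, clarsimp)
  fix c x y assume C: "spectral lam C" and c: "0 \<le> c" and x: "x \<in> C" and y: "lam y = lam (c *\<^sub>R x)"
  show "\<exists>c' x'. y = c' *\<^sub>R x' \<and> 0 \<le> c' \<and> x' \<in> C"
  proof (cases "c = 0")
    case True
    then have "y = 0" using y lam_zero by simp
    then show ?thesis using x by (rule_tac x=0 in exI, auto)
  next
    case False
    then have cpos: "c > 0" using c by simp
    have "lam ((1/c) *\<^sub>R y) = lam x" using lam_homog[of "1/c" y] y lam_homog[OF c] cpos by simp
    then have "(1/c) *\<^sub>R y \<in> C" using C x spectralD by metis
    then show ?thesis using cpos by (rule_tac x=c in exI, rule_tac x="(1/c) *\<^sub>R y" in exI, auto)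
  qed
qed

end


lemma norm_diff_sq': "(norm (a - b))\<^sup>2 = (norm a)\<^sup>2 + (norm b)\<^sup>2 - 2 * inner a (b::'a::real_inner)"
  by (simp add: power2_norm_eq_inner inner_diff_left inner_diff_right inner_commute)

lemma para: "(norm (u - v))\<^sup>2 = 2*(norm (x-u))\<^sup>2 + 2*(norm (x-v))\<^sup>2 - 4*(norm (x - (1/2) *\<^sub>R (u+v)))\<^sup>2"
  for u v x :: "'a::real_inner"
  by (simp add: power2_norm_eq_inner inner_diff_left inner_diff_right inner_add_left inner_add_right inner_commute algebra_simps)

lemma proj_exists:
  fixes C :: "'v::real_inner set"
  assumes comp: "complete (UNIV::'v set)" and cl: "closed C" and cv: "convex C" and ne: "C \<noteq> {}"
  shows "\<exists>p\<in>C. \<forall>y\<in>C. norm (x - p) \<le> norm (x - y)"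
proof -
  define d where "d = infdist x C"
  have d_le: "d \<le> norm (x - y)" if "y \<in> C" for y
    using infdist_le[OF that, of x] unfolding d_def dist_norm .
  have d0: "0 \<le> d" unfolding d_def by (rule infdist_nonneg)
  have "\<exists>y\<in>C. norm (x - y) < d + inverse (real (Suc n))" for n
  proof -
    have "(INF a\<in>C. dist x a) < d + inverse (real (Suc n))"
      using infdist_notempty[OF ne, of x] unfolding d_def by simp
    moreover have "bdd_below ((\<lambda>a. dist x a) ` C)" by (rule bdd_belowI[of _ 0]) auto
    ultimately show ?thesis using cINF_less_iff[OF ne] by (auto simp: dist_norm)
  qed
  then obtain y where y: "\<And>n. y n \<in> C" "\<And>n. norm (x - y n) < d + inverse (real (Suc n))"
    by metis
  have bound: "(norm (y m - y n))\<^sup>2 \<le> 2 * (d + inverse (real (Suc m)))\<^sup>2 + 2 * (d + inverse (real (Suc n)))\<^sup>2 - 4 * d\<^sup>2"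
    for m n
  proof -
    define z where "z = (1/2) *\<^sub>R (y m + y n)"
    have "z \<in> C" unfolding z_def using convexD[OF cv y(1)[of m] y(1)[of n], of "1/2" "1/2"]
      by (simp add: scaleR_add_right)
    then have "d \<le> norm (x - z)" by (rule d_le)
    then have "d\<^sup>2 \<le> (norm (x - z))\<^sup>2" using d0 by (intro power_mono) auto
    moreover have "(norm (x - y m))\<^sup>2 \<le> (d + inverse (real (Suc m)))\<^sup>2"
      using y(2)[of m] by (intro power_mono) (auto intro: less_imp_le)
    moreover have "(norm (x - y n))\<^sup>2 \<le> (d + inverse (real (Suc n)))\<^sup>2"
      using y(2)[of n] by (intro power_mono) (auto intro: less_imp_le)
    ultimately show ?thesis using para[of "y m" "y n" x] unfolding z_def by linarith
  qed
  have "Cauchy y"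
  proof (rule CauchyI)
    fix e :: real assume e: "0 < e"
    obtain N where N: "4 * (2 * d + 1) / e\<^sup>2 < real (Suc N)"
      using reals_Archimedean2 by (metis less_Suc_eq of_nat_less_iff order.strict_trans)
    define \<eta> where "\<eta> = inverse (real (Suc N))"
    have eta: "0 < \<eta>" "\<eta> \<le> 1" unfolding \<eta>_def by (auto simp: inverse_le_1_iff)
    have "4 * (2 * d + 1) < e\<^sup>2 * real (Suc N)" using N e by (simp add: divide_less_eq mult.commute)
    then have eta2: "4 * (2 * d + 1) * \<eta> < e\<^sup>2" unfolding \<eta>_def by (simp add: field_simps)
    show "\<exists>M. \<forall>m\<ge>M. \<forall>n\<ge>M. norm (y m - y n) < e"
    proof (intro exI allI impI)
      fix m n assume m: "N \<le> m" and n: "N \<le> n"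
      have im: "inverse (real (Suc m)) \<le> \<eta>" and inn: "inverse (real (Suc n)) \<le> \<eta>"
        unfolding \<eta>_def using m n by (auto simp: field_simps)
      have "(d + inverse (real (Suc m)))\<^sup>2 \<le> (d + \<eta>)\<^sup>2"
        using im d0 by (intro power_mono) auto
      moreover have "(d + inverse (real (Suc n)))\<^sup>2 \<le> (d + \<eta>)\<^sup>2"
        using inn d0 by (intro power_mono) auto
      ultimately have "(norm (y m - y n))\<^sup>2 \<le> 4 * (d + \<eta>)\<^sup>2 - 4 * d\<^sup>2"
        using bound[of m n] by linarith
      also have "\<dots> = 4 * \<eta> * (2 * d + \<eta>)" by (simp add: power2_eq_square algebra_simps)
      also have "\<dots> \<le> 4 * \<eta> * (2 * d + 1)" using eta by (intro mult_left_mono) auto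
      also have "\<dots> < e\<^sup>2" using eta2 by (simp add: algebra_simps)
      finally have "(norm (y m - y n))\<^sup>2 < e\<^sup>2" .
      then show "norm (y m - y n) < e" by (rule power_less_imp_less_base) (use e in simp)
    qed
  qed
  then obtain p where p: "y \<longlonglongrightarrow> p" using comp completeE by blast
  have pC: "p \<in> C" using closed_sequentially[OF cl] y(1) p by blast
  have "norm (x - p) \<le> d"
  proof (rule LIMSEQ_le)
    show "(\<lambda>n. norm (x - y n)) \<longlonglongrightarrow> norm (x - p)" by (intro tendsto_intros p)
    show "(\<lambda>n. d + inverse (real (Suc n))) \<longlonglongrightarrow> d"
      using tendsto_add[OF tendsto_const LIMSEQ_inverse_real_of_nat, of d] by simp
    show "\<exists>N. \<forall>n\<ge>N. norm (x - y n) \<le> d + inverse (real (Suc n))"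
      using y(2) less_imp_le by blast
  qed
  then show ?thesis using pC d_le by force
qed

lemma hilbert_sep:
  fixes C :: "'v::real_inner set"
  assumes comp: "complete (UNIV::'v set)" and cl: "closed C" and cv: "convex C" and x: "x \<notin> C"
  shows "\<exists>c \<alpha>. (\<forall>y\<in>C. inner c y \<le> \<alpha>) \<and> \<alpha> < inner c x"
proof (cases "C = {}")
  case True
  then show ?thesis by (rule_tac x=0 in exI, rule_tac x="-1" in exI) auto
next
  case False
  then obtain p where pC: "p \<in> C" and pmin: "\<And>y. y \<in> C \<Longrightarrow> norm (x - p) \<le> norm (x - y)"
    using proj_exists[OF comp cl cv] by blast
  have var: "inner (x - p) (y - p) \<le> 0" if yC: "y \<in> C" for y
  proof (rule ccontr)
    assume "\<not> inner (x - p) (y - p) \<le> 0"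
    then have a: "0 < inner (x - p) (y - p)" by simp
    define a' where "a' = inner (x - p) (y - p)"
    define nw where "nw = (norm (y - p))\<^sup>2"
    define t where "t = a' / (a' + nw)"
    have nw0: "0 \<le> nw" unfolding nw_def by simp
    have a'0: "0 < a'" using a unfolding a'_def .
    have t0: "0 < t" unfolding t_def using a'0 nw0 by simp
    have t1: "t \<le> 1" unfolding t_def using a'0 nw0 by simp
    have "(1 - t) *\<^sub>R p + t *\<^sub>R y \<in> C" using convexD[OF cv pC yC, of "1 - t" t] t0 t1 by simp
    then have le: "norm (x - p) \<le> norm (x - ((1 - t) *\<^sub>R p + t *\<^sub>R y))" by (rule pmin)
    have eq: "x - ((1 - t) *\<^sub>R p + t *\<^sub>R y) = (x - p) - t *\<^sub>R (y - p)"
      by (simp add: algebra_simps)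
    have "(norm (x - ((1 - t) *\<^sub>R p + t *\<^sub>R y)))\<^sup>2 = (norm (x - p))\<^sup>2 + t\<^sup>2 * nw - 2 * t * a'"
    proof -
      have "(norm (x - ((1 - t) *\<^sub>R p + t *\<^sub>R y)))\<^sup>2 = (norm (x - p))\<^sup>2 + (norm (t *\<^sub>R (y - p)))\<^sup>2 - 2 * inner (x - p) (t *\<^sub>R (y - p))"
        unfolding eq by (rule norm_diff_sq')
      also have "\<dots> = (norm (x - p))\<^sup>2 + t\<^sup>2 * nw - 2 * t * a'"
        unfolding nw_def a'_def by (simp add: power_mult_distrib)
      finally show ?thesis .
    qed
    moreover have "t * nw < 2 * a'"
    proof -
      have "t * nw = a' * (nw / (a' + nw))" unfolding t_def by simp
      also have "\<dots> \<le> a' * 1" using a'0 nw0 by (intro mult_left_mono) auto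
      finally show ?thesis using a'0 by simp
    qed
    then have "t\<^sup>2 * nw - 2 * t * a' < 0"
      using t0 by (simp add: power2_eq_square)
    ultimately have "(norm (x - ((1 - t) *\<^sub>R p + t *\<^sub>R y)))\<^sup>2 < (norm (x - p))\<^sup>2" by linarith
    moreover have "(norm (x - p))\<^sup>2 \<le> (norm (x - ((1 - t) *\<^sub>R p + t *\<^sub>R y)))\<^sup>2"
      using le by (intro power_mono) auto
    ultimately show False by linarith
  qed
  show ?thesis
  proof (rule exI[of _ "x - p"], rule exI[of _ "inner (x - p) p"], intro conjI ballI)
    fix y assume "y \<in> C"
    then show "inner (x - p) y \<le> inner (x - p) p" using var[of y] by (simp add: inner_diff_right)
  next
    have "x \<noteq> p" using x pC by auto
    then have "0 < inner (x - p) (x - p)" by simp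
    then show "inner (x - p) p < inner (x - p) x" by (simp add: inner_diff_right)
  qed
qed


context
  fixes lam :: "'v::real_inner \<Rightarrow> 'w::real_inner"
  assumes ftvn: "FTvN lam"
begin

lemma spectral_clconv:
  assumes comp: "complete (UNIV::'v set)" and E: "spectral lam E"
  shows "spectral lam (closure (convex hull E))"
proof (rule spectralI)
  fix z z' assume z: "z \<in> closure (convex hull E)" and z': "lam z' = lam z"
  show "z' \<in> closure (convex hull E)"
  proof (rule ccontr)
    assume "z' \<notin> closure (convex hull E)"
    then obtain c \<alpha> where H: "\<forall>y\<in>closure (convex hull E). inner c y \<le> \<alpha>" "\<alpha> < inner c z'"
      using hilbert_sep[OF comp closed_closure convex_closure[OF convex_convex_hull]] by blast
    obtain ct where ct: "lam ct = lam c" "inner z ct = inner (lam z) (lam c)" using F3[OF ftvn, of c z] by blast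
    have "inner c z' \<le> inner (lam c) (lam z')" by (rule F2[OF ftvn])
    also have "\<dots> = inner ct z" using z' ct by (simp add: inner_commute)
    finally have 1: "inner c z' \<le> inner ct z" .
    have "E \<subseteq> {y. inner ct y \<le> \<alpha>}"
    proof
      fix e assume e: "e \<in> E"
      obtain e' where e': "e' \<in> E" "inner (lam c) (lam e) = inner c e'" using key[OF ftvn E e] by blast
      have "inner ct e \<le> inner (lam ct) (lam e)" by (rule F2[OF ftvn])
      also have "\<dots> = inner c e'" using ct e' by simp
      also have "\<dots> \<le> \<alpha>" using H(1) e' hull_subset[of E convex] closure_subset by blast
      finally show "e \<in> {y. inner ct y \<le> \<alpha>}" by simp
    qed
    then have "convex hull E \<subseteq> {y. inner ct y \<le> \<alpha>}" by (intro hull_minimal convex_halfspace_le)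
    then have "closure (convex hull E) \<subseteq> {y. inner ct y \<le> \<alpha>}" by (intro closure_minimal closed_halfspace_le)
    then have "inner ct z \<le> \<alpha>" using z by blast
    then show False using 1 H(2) by simp
  qed
qed

lemma mink_sum_alt: "mink_sum A B = (\<Union>x\<in>A. \<Union>y\<in>B. {x + y})"
  unfolding mink_sum_def by auto

lemma spectral_sum_compact:
  assumes comp: "complete (UNIV::'v set)"
    and A: "compact A" "convex A" "spectral lam A" and B: "compact B" "convex B" "spectral lam B"
  shows "spectral lam (mink_sum A B)"
proof (rule spectralI)
  fix z z' assume z: "z \<in> mink_sum A B" and z': "lam z' = lam z"
  have clM: "closed (mink_sum A B)" unfolding mink_sum_def
    using compact_sums[OF A(1) B(1)] compact_imp_closed by blast
  have cvM: "convex (mink_sum A B)" unfolding mink_sum_alt using convex_sums[OF A(2) B(2)] .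
  show "z' \<in> mink_sum A B"
  proof (rule ccontr)
    assume "z' \<notin> mink_sum A B"
    then obtain c \<alpha> where H: "\<forall>y\<in>mink_sum A B. inner c y \<le> \<alpha>" "\<alpha> < inner c z'"
      using hilbert_sep[OF comp clM cvM] by blast
    obtain a b where ab: "z = a + b" "a \<in> A" "b \<in> B" using z unfolding mink_sum_def by blast
    obtain ct where ct: "lam ct = lam c" "inner z ct = inner (lam z) (lam c)" using F3[OF ftvn, of c z] by blast
    have "inner c z' \<le> inner (lam c) (lam z')" by (rule F2[OF ftvn])
    also have "\<dots> = inner ct z" using z' ct by (simp add: inner_commute)
    also have "\<dots> = inner ct a + inner ct b" using ab by (simp add: inner_add_right)
    also have "\<dots> \<le> inner (lam ct) (lam a) + inner (lam ct) (lam b)" using F2[OF ftvn] add_mono by blast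
    also have "\<dots> = inner (lam c) (lam a) + inner (lam c) (lam b)" using ct by simp
    finally have 1: "inner c z' \<le> inner (lam c) (lam a) + inner (lam c) (lam b)" .
    obtain a' where a': "a' \<in> A" "inner (lam c) (lam a) = inner c a'" using key[OF ftvn A(3) ab(2)] by blast
    obtain b' where b': "b' \<in> B" "inner (lam c) (lam b) = inner c b'" using key[OF ftvn B(3) ab(3)] by blast
    have "a' + b' \<in> mink_sum A B" using a' b' unfolding mink_sum_def by blast
    then have "inner c (a' + b') \<le> \<alpha>" using H(1) by blast
    then show False using 1 a' b' H(2) by (simp add: inner_add_right)
  qed
qed

end


lemma fd_subseq:
  fixes X :: "nat \<Rightarrow> 'v::real_inner"
  shows "finite B \<Longrightarrow> card B \<le> n \<Longrightarrow> (\<forall>k. X k \<in> span B) \<Longrightarrow> bounded (range X)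
    \<Longrightarrow> \<exists>l r. strict_mono r \<and> (X \<circ> r) \<longlonglongrightarrow> l"
proof (induction n arbitrary: B X)
  case 0
  then have "B = {}" by auto
  then have "X \<circ> id = (\<lambda>k. 0)" using 0 span_empty by auto
  then have "strict_mono (id::nat\<Rightarrow>nat) \<and> (X \<circ> id) \<longlonglongrightarrow> 0" by (simp add: strict_mono_def)
  then show ?case by blast
next
  case (Suc n)
  show ?case
  proof (cases "B = {}")
    case True
    then have "X \<circ> id = (\<lambda>k. 0)" using Suc.prems span_empty by auto
    then have "strict_mono (id::nat\<Rightarrow>nat) \<and> (X \<circ> id) \<longlonglongrightarrow> 0" by (simp add: strict_mono_def)
    then show ?thesis by blast
  next
    case False
    then obtain b where b: "b \<in> B" by auto
    define B0 where "B0 = B - {b}"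
    have fB0: "finite B0" "card B0 \<le> n" using Suc.prems(1,2) b by (auto simp: B0_def card_Diff_singleton)
    have BB0: "B = insert b B0" using b B0_def by auto
    show ?thesis
    proof (cases "b = 0")
      case True
      then have "span B = span B0" using BB0 span_insert_0 by simp
      then show ?thesis using Suc.IH[OF fB0] Suc.prems(3,4) by auto
    next
      case False
      define P where "P v = v - (inner v b / inner b b) *\<^sub>R b" for v
      have linP: "linear P"
      proof (rule linearI)
        fix x y show "P (x + y) = P x + P y"
          unfolding P_def by (simp add: inner_add_left add_divide_distrib scaleR_add_left algebra_simps)
      next
        fix c x show "P (c *\<^sub>R x) = c *\<^sub>R P x"
          unfolding P_def by (simp add: scaleR_diff_right)
      qed
      have bb: "inner b b \<noteq> 0" using False by simp
      have Pb: "P b = 0" using bb unfolding P_def by simp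
      define B' where "B' = P ` B0"
      have fB': "finite B'" "card B' \<le> n" using fB0 card_image_le[OF fB0(1), of P]
        by (auto simp: B'_def)
      have PX: "\<forall>k. P (X k) \<in> span B'"
      proof
        fix k
        have "X k \<in> span (insert b B0)" using Suc.prems(3) BB0 by auto
        then obtain s where "X k - s *\<^sub>R b \<in> span B0" using span_insert by blast
        then have "P (X k - s *\<^sub>R b) \<in> span B'" unfolding B'_def span_linear_image[OF linP] by blast
        moreover have "P (X k - s *\<^sub>R b) = P (X k)" using linear_diff[OF linP] linear_scale[OF linP] Pb by simp
        ultimately show "P (X k) \<in> span B'" by simp
      qed
      obtain M where M: "\<And>k. norm (X k) \<le> M" using Suc.prems(4) unfolding bounded_iff by blast
      have nb: "0 < norm b" using False by simp
      have bbn: "inner b b = (norm b)\<^sup>2" by (simp add: dot_square_norm)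
      have coef: "\<bar>inner v b / inner b b\<bar> \<le> norm v / norm b" for v
      proof -
        have "\<bar>inner v b / inner b b\<bar> = \<bar>inner v b\<bar> / (norm b)\<^sup>2" using bbn by simp
        also have "\<dots> \<le> (norm v * norm b) / (norm b)\<^sup>2"
          using Cauchy_Schwarz_ineq2[of v b] nb by (intro divide_right_mono) auto
        also have "\<dots> = norm v / norm b" using nb by (simp add: power2_eq_square)
        finally show ?thesis .
      qed
      have Pbound: "norm (P v) \<le> 2 * norm v" for v
      proof -
        have "norm (P v) \<le> norm v + norm ((inner v b / inner b b) *\<^sub>R b)"
          unfolding P_def by (rule norm_triangle_ineq4)
        also have "norm ((inner v b / inner b b) *\<^sub>R b) = \<bar>inner v b / inner b b\<bar> * norm b" by simp
        also have "\<dots> \<le> norm v / norm b * norm b" using coef[of v] nb by (intro mult_right_mono) auto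
        also have "\<dots> = norm v" using nb by simp
        finally show ?thesis by simp
      qed
      have "bounded (range (\<lambda>k. P (X k)))" unfolding bounded_iff
      proof (intro exI ballI)
        fix z assume "z \<in> range (\<lambda>k. P (X k))"
        then obtain k where k: "z = P (X k)" by auto
        have "norm z \<le> 2 * norm (X k)" using Pbound k by simp
        also have "\<dots> \<le> 2 * M" using M[of k] by simp
        finally show "norm z \<le> 2 * M" .
      qed
      then obtain l1 r1 where r1: "strict_mono r1" "((\<lambda>k. P (X k)) \<circ> r1) \<longlonglongrightarrow> l1"
        using Suc.IH[OF fB', of "\<lambda>k. P (X k)"] PX by blast
      define s where "s k = inner (X k) b / inner b b" for k
      have "bounded (range (s \<circ> r1))" unfolding bounded_iff
      proof (intro exI ballI)
        fix z assume "z \<in> range (s \<circ> r1)"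
        then obtain k where "z = s (r1 k)" by auto
        have "norm z \<le> norm (X (r1 k)) / norm b" using coef[of "X (r1 k)"] \<open>z = s (r1 k)\<close> by (simp add: s_def)
        also have "\<dots> \<le> M / norm b" using M[of "r1 k"] nb by (intro divide_right_mono) auto
        finally show "norm z \<le> M / norm b" .
      qed
      then obtain l2 r2 where r2: "strict_mono r2" "((s \<circ> r1) \<circ> r2) \<longlonglongrightarrow> l2"
        using bounded_imp_convergent_subsequence by blast
      have Xeq: "X k = P (X k) + s k *\<^sub>R b" for k by (simp add: P_def s_def)
      have "X \<circ> (r1 \<circ> r2) = (\<lambda>k. (((\<lambda>k. P (X k)) \<circ> r1) \<circ> r2) k + ((s \<circ> r1) \<circ> r2) k *\<^sub>R b)"
        using Xeq by (auto simp: fun_eq_iff)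
      moreover have "(\<lambda>k. (((\<lambda>k. P (X k)) \<circ> r1) \<circ> r2) k + ((s \<circ> r1) \<circ> r2) k *\<^sub>R b) \<longlonglongrightarrow> l1 + l2 *\<^sub>R b"
        by (intro tendsto_add tendsto_scaleR LIMSEQ_subseq_LIMSEQ[OF r1(2) r2(1)] r2(2) tendsto_const)
      ultimately show ?thesis using strict_mono_o[OF r1(1) r2(1)] by metis
    qed
  qed
qed

lemma fd_subseq':
  assumes "fin_dim TYPE('v::real_inner)" and "bounded (range (X::nat \<Rightarrow> 'v))"
  shows "\<exists>l r. strict_mono r \<and> (X \<circ> r) \<longlonglongrightarrow> l"
proof -
  obtain B :: "'v set" where "finite B" "span B = UNIV" using assms(1) unfolding fin_dim_def by blast
  then show ?thesis using fd_subseq[of B "card B" X] assms(2) by auto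
qed

lemma fd_complete:
  assumes "fin_dim TYPE('v::real_inner)"
  shows "complete (UNIV::'v set)"
  unfolding complete_def
proof (intro allI impI)
  fix f :: "nat \<Rightarrow> 'v" assume "(\<forall>n. f n \<in> UNIV) \<and> Cauchy f"
  then have C: "Cauchy f" by blast
  obtain l r where "strict_mono r" "(f \<circ> r) \<longlonglongrightarrow> l" using fd_subseq'[OF assms cauchy_imp_bounded[OF C]] by blast
  then show "\<exists>l\<in>UNIV. f \<longlonglongrightarrow> l" using Cauchy_converges_subseq[OF C] by blast
qed

lemma fd_compact:
  assumes "fin_dim TYPE('v::real_inner)" and "bounded (S::'v set)" and "closed S"
  shows "compact S"
  unfolding compact_eq_seq_compact_metric seq_compact_def
proof (intro allI impI)
  fix f :: "nat \<Rightarrow> 'v" assume f: "\<forall>n. f n \<in> S"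
  have "bounded (range f)" using assms(2) f by (meson bounded_subset image_subsetI)
  then obtain l r where lr: "strict_mono r" "(f \<circ> r) \<longlonglongrightarrow> l" using fd_subseq'[OF assms(1)] by blast
  have "l \<in> S" using closed_sequentially[OF assms(3), of "f \<circ> r"] f lr(2) by auto
  then show "\<exists>l\<in>S. \<exists>r. strict_mono r \<and> (f \<circ> r) \<longlonglongrightarrow> l" using lr by blast
qed


lemma aff_dep_big:
  fixes B S :: "'v::real_vector set"
  assumes B: "finite B" "span B = UNIV" and S: "finite S" "card B + 2 \<le> card S"
  shows "affine_dependent S"
proof -
  have "S \<noteq> {}" using S by auto
  then obtain a where a: "a \<in> S" by auto
  define T where "T = (\<lambda>x. -a + x) ` (S - {a})"
  have cT: "card T = card (S - {a})" unfolding T_def by (rule card_image) (simp add: inj_on_def)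
  have "card (S - {a}) > card B" using S a by (simp add: card_Diff_singleton)
  then have big: "card T > card B" using cT by simp
  have "dependent T"
  proof (rule ccontr)
    assume "\<not> dependent T"
    moreover have "T \<subseteq> span B" using B(2) by simp
    ultimately have "card T \<le> card B" using independent_span_bound[OF B(1)] by blast
    then show False using big by simp
  qed
  then have "affine_dependent (insert a (S - {a}))"
    using affine_dependent_iff_dependent[of a "S - {a}"] by (simp add: T_def)
  then show ?thesis using a by (simp add: insert_absorb)
qed

lemma caratheodory_gen:
  fixes p :: "'a::real_vector set"
  assumes dep: "\<And>S::'a set. finite S \<Longrightarrow> N + 1 \<le> card S \<Longrightarrow> affine_dependent S"
    and yp: "y \<in> convex hull p"
  shows "\<exists>S u. finite S \<and> S \<subseteq> p \<and> card S \<le> N \<and>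
        (\<forall>x\<in>S. 0 \<le> u x) \<and> sum u S = 1 \<and> sum (\<lambda>v. u v *\<^sub>R v) S = y"
proof -
  let ?P = "\<lambda>n. \<exists>S u. finite S \<and> card S = n \<and> S \<subseteq> p \<and> (\<forall>x\<in>S. 0 \<le> u x) \<and>
    sum u S = 1 \<and> (\<Sum>v\<in>S. u v *\<^sub>R v) = y"
  have "\<exists>S u. finite S \<and> S \<subseteq> p \<and> (\<forall>x\<in>S. 0 \<le> u x) \<and> sum u S = 1 \<and> (\<Sum>v\<in>S. u v *\<^sub>R v) = y"
    using yp unfolding convex_hull_explicit by blast
  then obtain N0 where "?P N0" by auto
  then have "\<exists>n\<le>N0. (\<forall>k<n. \<not> ?P k) \<and> ?P n"
    by (rule_tac ex_least_nat_le, auto)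
  then obtain n where "?P n" and smallest: "\<forall>k<n. \<not> ?P k"
    by blast
  then obtain S u where S: "finite S" "card S = n" "S\<subseteq>p"
    and u: "\<forall>x\<in>S. 0 \<le> u x" "sum u S = 1"  "(\<Sum>v\<in>S. u v *\<^sub>R v) = y" by auto
  have "card S \<le> N"
  proof (rule ccontr, simp only: not_le)
    assume "N < card S"
    then have "affine_dependent S" using dep[OF S(1)] by simp
    then obtain w v where wv: "sum w S = 0" "v\<in>S" "w v \<noteq> 0" "(\<Sum>v\<in>S. w v *\<^sub>R v) = 0"
      using affine_dependent_explicit_finite[OF S(1)] by auto
    define i where "i = (\<lambda>v. (u v) / (- w v)) ` {v\<in>S. w v < 0}"
    define t where "t = Min i"
    have "\<exists>x\<in>S. w x < 0"
      by (smt (verit, best) S(1) sum_pos2 wv)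
    then have "i \<noteq> {}" unfolding i_def by auto
    then have "t \<ge> 0"
      using Min_ge_iff[of i 0] and S(1) u[unfolded le_less]
      unfolding t_def i_def
      by (auto simp: divide_le_0_iff)
    have t: "\<forall>v\<in>S. u v + t * w v \<ge> 0"
    proof
      fix v
      assume "v \<in> S"
      then have v: "0 \<le> u v"
        using u(1) by blast
      show "0 \<le> u v + t * w v"
      proof (cases "w v < 0")
        case False
        thus ?thesis using v \<open>t\<ge>0\<close> by auto
      next
        case True
        then have "t \<le> u v / (- w v)"
          using \<open>v\<in>S\<close> S unfolding t_def i_def by (auto intro: Min_le)
        then show ?thesis
          unfolding real_0_le_add_iff
          using True neg_le_minus_divide_eq by auto
      qed
    qed
    obtain a where "a \<in> S" and "t = (\<lambda>v. (u v) / (- w v)) a" and "w a < 0"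
      using Min_in[OF _ \<open>i\<noteq>{}\<close>] and S(1) unfolding i_def t_def by auto
    then have a: "a \<in> S" "u a + t * w a = 0" by auto
    have *: "\<And>f. sum f (S - {a}) = sum f S - ((f a)::'b::ab_group_add)"
      unfolding sum.remove[OF S(1) \<open>a\<in>S\<close>] by auto
    have "(\<Sum>v\<in>S. u v + t * w v) = 1"
      by (metis add.right_neutral mult_zero_right sum.distrib sum_distrib_left u(2) wv(1))
    moreover have "(\<Sum>v\<in>S. u v *\<^sub>R v + (t * w v) *\<^sub>R v) - (u a *\<^sub>R a + (t * w a) *\<^sub>R a) = y"
      unfolding sum.distrib u(3) scaleR_scaleR[symmetric] scaleR_right.sum [symmetric] wv(4)
      using a(2) [THEN eq_neg_iff_add_eq_0 [THEN iffD2]] by simp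
    ultimately have "?P (n - 1)"
      apply (rule_tac x="(S - {a})" in exI)
      apply (rule_tac x="\<lambda>v. u v + t * w v" in exI)
      using S t a
      apply (auto simp: * scaleR_left_distrib)
      done
    then show False
      using smallest[THEN spec[where x="n - 1"]] \<open>N < card S\<close> S(2) by auto
  qed
  then show ?thesis using S u by blast
qed


primrec Rset :: "'v::real_normed_vector set \<Rightarrow> nat \<Rightarrow> ('v \<times> real) set" where
  "Rset K 0 = {(0,0)}"
| "Rset K (Suc m) = (\<lambda>p. (fst (fst p) + fst (snd p) *\<^sub>R snd (snd p), snd (fst p) + fst (snd p))) ` (Rset K m \<times> ({0..1} \<times> K))"

lemma Rset_compact: "compact K \<Longrightarrow> compact (Rset K m)"
proof (induction m)
  case 0 then show ?case by simp
next
  case (Suc m)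
  have "compact (Rset K m \<times> ({0..1::real} \<times> K))"
    using Suc by (intro compact_Times compact_Icc) auto
  moreover have "continuous_on (Rset K m \<times> ({0..1::real} \<times> K))
     (\<lambda>p. (fst (fst p) + fst (snd p) *\<^sub>R snd (snd p), snd (fst p) + fst (snd p)))"
    by (intro continuous_intros)
  ultimately show ?case by (simp add: compact_continuous_image)
qed

lemma Rset_intro: "(\<forall>i<m. 0 \<le> u i \<and> u i \<le> 1 \<and> x i \<in> K) \<Longrightarrow> (\<Sum>i<m. u i *\<^sub>R x i, \<Sum>i<m. u i) \<in> Rset K m"
proof (induction m)
  case 0 then show ?case by simp
next
  case (Suc m)
  then have "((\<Sum>i<m. u i *\<^sub>R x i, \<Sum>i<m. u i), (u m, x m)) \<in> Rset K m \<times> ({0..1} \<times> K)" by auto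
  then have "((\<Sum>i<m. u i *\<^sub>R x i) + u m *\<^sub>R x m, (\<Sum>i<m. u i) + u m) \<in> (\<lambda>p. (fst (fst p) + fst (snd p) *\<^sub>R snd (snd p), snd (fst p) + fst (snd p))) ` (Rset K m \<times> ({0..1} \<times> K))"
    by (rule rev_image_eqI) simp
  then show ?case by simp
qed

lemma Rset_elim: "(a, s) \<in> Rset K m \<Longrightarrow> \<exists>u x. (\<forall>i<m. 0 \<le> u i \<and> x i \<in> K) \<and> a = (\<Sum>i<m. u i *\<^sub>R x i) \<and> s = (\<Sum>i<m. u i)"
proof (induction m arbitrary: a s)
  case 0 then show ?case by simp
next
  case (Suc m)
  then obtain a0 s0 t z where H: "(a0, s0) \<in> Rset K m" "t \<in> {0..1}" "z \<in> K" "a = a0 + t *\<^sub>R z" "s = s0 + t"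
    by auto
  obtain u x where ux: "\<forall>i<m. 0 \<le> u i \<and> x i \<in> K" "a0 = (\<Sum>i<m. u i *\<^sub>R x i)" "s0 = (\<Sum>i<m. u i)"
    using Suc.IH[OF H(1)] by blast
  have e1: "(\<Sum>i<m. (u(m := t)) i *\<^sub>R (x(m := z)) i) = (\<Sum>i<m. u i *\<^sub>R x i)" by (rule sum.cong) auto
  have e2: "(\<Sum>i<m. (u(m := t)) i) = (\<Sum>i<m. u i)" by (rule sum.cong) auto
  show ?case
  proof (intro exI conjI)
    show "\<forall>i<Suc m. 0 \<le> (u(m := t)) i \<and> (x(m := z)) i \<in> K" using ux(1) H(2,3) by (auto simp: less_Suc_eq)
    show "a = (\<Sum>i<Suc m. (u(m := t)) i *\<^sub>R (x(m := z)) i)" using e1 ux(2) H(4) by simp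
    show "s = (\<Sum>i<Suc m. (u(m := t)) i)" using e2 ux(3) H(5) by simp
  qed
qed

lemma compact_conv_fd:
  assumes fd: "fin_dim TYPE('v::real_inner)" and K: "compact (K::'v set)"
  shows "compact (convex hull K)"
proof (cases "K = {}")
  case True then show ?thesis by simp
next
  case False
  then obtain k0 where k0: "k0 \<in> K" by auto
  obtain B :: "'v set" where B: "finite B" "span B = UNIV" using fd unfolding fin_dim_def by blast
  define N where "N = card B + 1"
  have dep: "\<And>S::'v set. finite S \<Longrightarrow> N + 1 \<le> card S \<Longrightarrow> affine_dependent S"
    using aff_dep_big[OF B] unfolding N_def by simp
  have eq: "convex hull K = fst ` (Rset K N \<inter> {p. snd p = 1})"
  proof (rule set_eqI, rule iffI)
    fix y assume "y \<in> convex hull K"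
    then obtain S u where S: "finite S" "S \<subseteq> K" "card S \<le> N" "\<forall>x\<in>S. 0 \<le> u x" "sum u S = 1"
       "(\<Sum>v\<in>S. u v *\<^sub>R v) = y"
      using caratheodory_gen[OF dep] by blast
    obtain h where h: "bij_betw h {0..<card S} S" using ex_bij_betw_nat_finite[OF S(1)] by blast
    have h': "bij_betw h {..<card S} S" using h by (simp add: atLeast0LessThan)
    define w where "w i = (if i < card S then u (h i) else 0)" for i
    define x where "x i = (if i < card S then h i else k0)" for i
    have hS: "i < card S \<Longrightarrow> h i \<in> S" for i using h' bij_betwE by blast
    have ule: "v \<in> S \<Longrightarrow> u v \<le> 1" for v
      using member_le_sum[of v S u] S(1,4,5) by simp
    have cond: "\<forall>i<N. 0 \<le> w i \<and> w i \<le> 1 \<and> x i \<in> K"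
      using hS S(2,4) ule k0 unfolding w_def x_def by auto
    have sub: "{..<card S} \<subseteq> {..<N}" using S(3) by auto
    have s1: "(\<Sum>i<N. w i *\<^sub>R x i) = (\<Sum>i<card S. w i *\<^sub>R x i)"
      by (rule sum.mono_neutral_right[OF _ sub]) (auto simp: w_def)
    also have "\<dots> = (\<Sum>i<card S. u (h i) *\<^sub>R h i)" by (rule sum.cong) (auto simp: w_def x_def)
    also have "\<dots> = (\<Sum>v\<in>S. u v *\<^sub>R v)" using sum.reindex_bij_betw[OF h', of "\<lambda>v. u v *\<^sub>R v"] by simp
    finally have s1': "(\<Sum>i<N. w i *\<^sub>R x i) = y" using S(6) by simp
    have "(\<Sum>i<N. w i) = (\<Sum>i<card S. w i)"
      by (rule sum.mono_neutral_right[OF _ sub]) (auto simp: w_def)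
    also have "\<dots> = (\<Sum>i<card S. u (h i))" by (rule sum.cong) (auto simp: w_def)
    also have "\<dots> = sum u S" using sum.reindex_bij_betw[OF h', of u] by simp
    finally have s2: "(\<Sum>i<N. w i) = 1" using S(5) by simp
    have "(\<Sum>i<N. w i *\<^sub>R x i, \<Sum>i<N. w i) \<in> Rset K N" by (rule Rset_intro[OF cond])
    then show "y \<in> fst ` (Rset K N \<inter> {p. snd p = 1})" using s1' s2 by force
  next
    fix y assume "y \<in> fst ` (Rset K N \<inter> {p. snd p = 1})"
    then obtain s where "(y, s) \<in> Rset K N" "s = 1" by force
    then obtain u x where ux: "\<forall>i<N. 0 \<le> u i \<and> x i \<in> K" "y = (\<Sum>i<N. u i *\<^sub>R x i)" "(\<Sum>i<N. u i) = 1"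
      using Rset_elim by metis
    show "y \<in> convex hull K" unfolding ux(2)
      by (rule convex_sum) (use ux hull_subset[of K convex] in auto)
  qed
  have "compact (Rset K N \<inter> {p. snd p = 1})"
    by (intro compact_Int_closed Rset_compact K closed_Collect_eq continuous_intros)
  then have "compact (fst ` (Rset K N \<inter> {p. snd p = 1}))"
    by (intro compact_continuous_image continuous_intros)
  then show ?thesis using eq by simp
qed


context
  fixes lam :: "'v::real_inner \<Rightarrow> 'w::real_inner"
  assumes ftvn: "FTvN lam"
begin

lemma orbit_hull:
  assumes fd: "fin_dim TYPE('v)" and S: "finite S"
  shows "compact (convex hull (lam -` (lam ` S))) \<and> spectral lam (convex hull (lam -` (lam ` S)))"
proof -
  define Orb where "Orb = lam -` (lam ` S)"
  have spOrb: "spectral lam Orb" unfolding Orb_def spectral_def by blast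
  have clO: "closed Orb" unfolding Orb_def
    by (intro closed_vimage finite_imp_closed lam_cont[OF ftvn] finite_imageI S)
  have bO: "bounded Orb" unfolding bounded_iff
  proof (intro exI ballI)
    fix x assume "x \<in> Orb"
    then obtain s where s: "s \<in> S" "lam x = lam s" unfolding Orb_def by auto
    have "norm x = norm s" using F1[OF ftvn, of x] F1[OF ftvn, of s] s(2) by simp
    also have "\<dots> \<le> (\<Sum>s\<in>S. norm s)" using member_le_sum[of s S norm] s(1) S by simp
    finally show "norm x \<le> (\<Sum>s\<in>S. norm s)" .
  qed
  have cO: "compact (convex hull Orb)" using compact_conv_fd[OF fd fd_compact[OF fd bO clO]] .
  then have "closure (convex hull Orb) = convex hull Orb" by (simp add: compact_imp_closed closure_closed)
  moreover have "spectral lam (closure (convex hull Orb))"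
    using spectral_clconv[OF ftvn fd_complete[OF fd] spOrb] .
  ultimately show ?thesis using cO unfolding Orb_def by simp
qed

lemma spectral_conv_fd:
  assumes fd: "fin_dim TYPE('v)" and E: "spectral lam E"
  shows "spectral lam (convex hull E)"
proof (rule spectralI)
  fix z z' assume z: "z \<in> convex hull E" and z': "lam z' = lam z"
  obtain S u where S: "finite S" "S \<subseteq> E" "\<forall>x\<in>S. 0 \<le> u x" "sum u S = 1" "(\<Sum>v\<in>S. u v *\<^sub>R v) = z"
    using z unfolding convex_hull_explicit by blast
  have zS: "z \<in> convex hull S" unfolding S(5)[symmetric]
    by (rule convex_sum) (use S hull_subset[of S convex] in auto)
  define Orb where "Orb = lam -` (lam ` S)"
  have SOrb: "S \<subseteq> Orb" unfolding Orb_def by auto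
  have OrbE: "Orb \<subseteq> E" unfolding Orb_def using S(2) spectralD[OF E] by fastforce
  have H: "spectral lam (convex hull Orb)" using orbit_hull[OF fd S(1)] unfolding Orb_def by blast
  have "z \<in> convex hull Orb" using zS hull_mono[OF SOrb] by blast
  then have "z' \<in> convex hull Orb" using spectralD[OF H] z' by blast
  then show "z' \<in> convex hull E" using hull_mono[OF OrbE] by blast
qed

lemma spectral_cone_fd:
  assumes fd: "fin_dim TYPE('v)" and E: "spectral lam E"
  shows "spectral lam (convex_cone hull E)"
proof (cases "E = {}")
  case True
  show ?thesis unfolding True convex_cone_hull_empty
    by (rule spectralI) (use lam_zero[OF ftvn] in auto)
next
  case False
  show ?thesis unfolding convex_cone_hull_separate_nonempty[OF False]
    by (rule spectral_conic[OF ftvn spectral_conv_fd[OF fd E]])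
qed

lemma spectral_sum_fd:
  assumes fd: "fin_dim TYPE('v)" and A: "convex A" "spectral lam A" and B: "convex B" "spectral lam B"
  shows "spectral lam (mink_sum A B)"
proof (rule spectralI)
  fix z z' assume z: "z \<in> mink_sum A B" and z': "lam z' = lam z"
  obtain a b where ab: "z = a + b" "a \<in> A" "b \<in> B" using z unfolding mink_sum_def by blast
  define A0 where "A0 = convex hull (lam -` (lam ` {a}))"
  define B0 where "B0 = convex hull (lam -` (lam ` {b}))"
  have A0: "compact A0" "spectral lam A0" "convex A0" using orbit_hull[OF fd, of "{a}"] unfolding A0_def by auto
  have B0: "compact B0" "spectral lam B0" "convex B0" using orbit_hull[OF fd, of "{b}"] unfolding B0_def by auto
  have "lam -` (lam ` {a}) \<subseteq> A" using spectralD[OF A(2) ab(2)] by auto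
  then have A0A: "A0 \<subseteq> A" unfolding A0_def using A(1) by (simp add: hull_minimal)
  have "lam -` (lam ` {b}) \<subseteq> B" using spectralD[OF B(2) ab(3)] by auto
  then have B0B: "B0 \<subseteq> B" unfolding B0_def using B(1) by (simp add: hull_minimal)
  have "a \<in> A0" unfolding A0_def by (rule hull_inc) simp
  moreover have "b \<in> B0" unfolding B0_def by (rule hull_inc) simp
  ultimately have "z \<in> mink_sum A0 B0" using ab unfolding mink_sum_def by blast
  then have "z' \<in> mink_sum A0 B0"
    using spectralD[OF spectral_sum_compact[OF ftvn fd_complete[OF fd] A0(1,3,2) B0(1,3,2)]] z' by blast
  then show "z' \<in> mink_sum A B" using A0A B0B unfolding mink_sum_def by blast
qed

end

theorem proposition5p4:
  fixes lam :: "'v::real_inner \<Rightarrow> 'w::real_inner" and E :: "'v set"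
  assumes ftvn: "FTvN lam" and spec: "spectral lam E"
  shows
    "(spectral lam (closure E) \<and> spectral lam (interior E) \<and> spectral lam (frontier E))
   \<and> (hilbert_space TYPE('v) \<longrightarrow> spectral lam (closure (convex hull E)))
   \<and> (fin_dim TYPE('v) \<longrightarrow>
        spectral lam (convex hull E) \<and> spectral lam (convex_cone hull E))
   \<and> (hilbert_space TYPE('v) \<longrightarrow>
        spectral lam (polar_cone E) \<and>
        (\<forall>S. spectral lam S \<and> subspace S \<longrightarrow> spectral lam (orthogonal_comp S)))
   \<and> (hilbert_space TYPE('v) \<longrightarrow>
        (\<forall>A B. compact A \<and> convex A \<and> spectral lam A \<and>
               compact B \<and> convex B \<and> spectral lam B \<longrightarrow> spectral lam (mink_sum A B)))
   \<and> (fin_dim TYPE('v) \<longrightarrow>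
        (\<forall>A B. convex A \<and> spectral lam A \<and> convex B \<and> spectral lam B \<longrightarrow>
               spectral lam (mink_sum A B)))"
proof -
  have c1: "spectral lam (closure E) \<and> spectral lam (interior E) \<and> spectral lam (frontier E)"
    using spectral_closure[OF ftvn spec] spectral_interior[OF ftvn spec] spectral_frontier[OF ftvn spec]
    by simp
  have c2: "hilbert_space TYPE('v) \<longrightarrow> spectral lam (closure (convex hull E))"
    unfolding hilbert_space_def using spectral_clconv[OF ftvn _ spec] by simp
  have c3: "fin_dim TYPE('v) \<longrightarrow> spectral lam (convex hull E) \<and> spectral lam (convex_cone hull E)"
    using spectral_conv_fd[OF ftvn _ spec] spectral_cone_fd[OF ftvn _ spec] by simp
  have c4: "hilbert_space TYPE('v) \<longrightarrow> spectral lam (polar_cone E) \<and>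
        (\<forall>S. spectral lam S \<and> subspace S \<longrightarrow> spectral lam (orthogonal_comp S))"
    using spectral_polar[OF ftvn spec] spectral_orth[OF ftvn] by simp
  have c5: "hilbert_space TYPE('v) \<longrightarrow>
        (\<forall>A B. compact A \<and> convex A \<and> spectral lam A \<and>
               compact B \<and> convex B \<and> spectral lam B \<longrightarrow> spectral lam (mink_sum A B))"
    unfolding hilbert_space_def using spectral_sum_compact[OF ftvn] by simp
  have c6: "fin_dim TYPE('v) \<longrightarrow>
        (\<forall>A B. convex A \<and> spectral lam A \<and> convex B \<and> spectral lam B \<longrightarrow>
               spectral lam (mink_sum A B))"
    using spectral_sum_fd[OF ftvn] by simp
  show ?thesis using c1 c2 c3 c4 c5 c6 by (simp only:)
qed


end
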